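(* Let $0<\beta<1$. There exists a positive strictly increasing function $\eta_1:(0,\infty)\to(0,\infty)$ depending only on $\beta$ such that the following holds. Let $T>0$, $c>0$, $F\in C^0([0,T];[0,\infty))$ and $u\in C^1([0,T];[0,\infty))$ with $$F(t)\ge c\,t^{\frac\beta{1-\beta}},\qquad \dot u(t)\ge F(t)-2u^\beta(t)\quad\text{on }[0,T].$$ Then $u(t)\ge\eta_1(c)\,t^{\frac1{1-\beta}}$ for all $t\in[0,T]$. *)

theory Defs
  imports "HOL-Analysis.Analysis"
begin

end

theory Submission
  imports Defs
begin

lemma comparison:
  fixes \<beta> \<gamma> \<eta> c T t1 :: real and F u u' :: "real \<Rightarrow> real"
  assumes b0: "0 < \<beta>" and b1: "\<beta> < 1" and g: "\<gamma> = 1/(1-\<beta>)"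
    and e0: "\<eta> > 0" and ec: "\<gamma>*\<eta> + 2*\<eta> powr \<beta> \<le> c"
    and der: "\<forall>t\<in>{0..T}. (u has_real_derivative u' t) (at t within {0..T})"
    and u0: "\<forall>t\<in>{0..T}. u t \<ge> 0"
    and Fc: "\<forall>t\<in>{0..T}. F t \<ge> c * t powr (\<beta> / (1 - \<beta>))"
    and uF: "\<forall>t\<in>{0..T}. u' t \<ge> F t - 2 * (u t) powr \<beta>"
    and t1: "t1 \<in> {0..T}"
  shows "u t1 \<ge> \<eta> * t1 powr \<gamma>"
proof (rule ccontr)
  assume neg: "\<not> u t1 \<ge> \<eta> * t1 powr \<gamma>"
  have gpos: "\<gamma> > 0" using g b1 by simp
  have bg: "\<beta> / (1 - \<beta>) = \<gamma> - 1" using g b1 by (simp add: field_simps)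
  have gb: "\<gamma> * \<beta> = \<gamma> - 1" using g b1 by (simp add: field_simps)
  define v where "v t = \<eta> * t powr \<gamma>" for t
  define w where "w t = u t - v t" for t
  have w1: "w t1 < 0" using neg by (simp add: w_def v_def)
  have t1pos: "t1 > 0"
  proof (rule ccontr)
    assume "\<not> t1 > 0" then have "t1 = 0" using t1 by auto
    then show False using neg u0 t1 by auto
  qed
  have T: "{0..t1} \<subseteq> {0..T}" using t1 by auto
  have cu: "continuous_on {0..T} u"
    using der by (metis DERIV_continuous continuous_on_eq_continuous_within)
  have cv: "continuous_on {0..t1} v" unfolding v_def
    by (intro continuous_intros continuous_on_powr') (auto simp: gpos)
  have cw: "continuous_on {0..t1} w" unfolding w_def
    using continuous_on_subset[OF cu T] cv by (intro continuous_intros)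
  define S where "S = {0..t1} \<inter> w -` {0..}"
  have clS: "closed S" unfolding S_def
    by (rule continuous_closed_preimage[OF cw]) auto
  have w0: "w 0 \<ge> 0" using u0 t1 gpos by (simp add: w_def v_def)
  have S0: "0 \<in> S" using w0 t1pos by (simp add: S_def)
  have bS: "bdd_above S" unfolding S_def by (rule bdd_aboveI[of _ t1]) auto
  define s where "s = Sup S"
  have sS: "s \<in> S" unfolding s_def using closed_contains_Sup[OF _ bS clS] S0 by blast
  have ws: "w s \<ge> 0" and s0: "0 \<le> s" and st1: "s \<le> t1" using sS by (auto simp: S_def)
  have slt: "s < t1" using st1 ws w1 by (cases "s = t1") auto
  have wneg: "w t < 0" if "s < t" "t \<le> t1" for t
  proof (rule ccontr)
    assume "\<not> w t < 0"
    then have "t \<in> S" using that s0 by (auto simp: S_def)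
    then have "t \<le> s" unfolding s_def using bS by (rule cSup_upper)
    then show False using that by simp
  qed
  have dw: "(w has_real_derivative (u' x - \<eta> * (\<gamma> * x powr (\<gamma> - 1)))) (at x)"
    if "s < x" "x < t1" for x
  proof -
    have "(u has_real_derivative u' x) (at x within {0..T})" using der that s0 t1 by auto
    moreover have "at x within {0..T} = at x" using that s0 t1 by (intro at_within_Icc_at) auto
    ultimately have du: "(u has_real_derivative u' x) (at x)" by simp
    have dv: "(v has_real_derivative \<eta> * (\<gamma> * x powr (\<gamma> - 1))) (at x)"
      unfolding v_def using that s0
      by (intro DERIV_cmult has_real_derivative_powr) auto
    show ?thesis unfolding w_def using du dv by (rule DERIV_diff)
  qed
  have "continuous_on {s..t1} w" using cw by (rule continuous_on_subset) (use s0 in auto)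
  then obtain l z where z: "s < z" "z < t1" and dz: "(w has_real_derivative l) (at z)"
    and mv: "w t1 - w s = (t1 - s) * l"
    using MVT[OF slt] dw by (metis real_differentiable_def)
  have l: "l = u' z - \<eta> * (\<gamma> * z powr (\<gamma> - 1))"
    using DERIV_unique[OF dz dw[OF z]] .
  have zpos: "z > 0" using z s0 by simp
  have zT: "z \<in> {0..T}" using z s0 t1 by auto
  have uzv: "u z < v z" using wneg[of z] z by (simp add: w_def)
  have "u z powr \<beta> < v z powr \<beta>"
    using uzv u0 zT b0 by (intro powr_less_mono2) auto
  also have "v z powr \<beta> = \<eta> powr \<beta> * z powr (\<gamma> - 1)"
    unfolding v_def using e0 zpos
    by (simp add: powr_mult powr_powr gb)
  finally have up: "u z powr \<beta> < \<eta> powr \<beta> * z powr (\<gamma> - 1)" .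
  have zg: "z powr (\<gamma> - 1) > 0" using zpos by simp
  have "u' z > c * z powr (\<gamma> - 1) - 2 * (\<eta> powr \<beta> * z powr (\<gamma> - 1))"
    using uF Fc zT up bg by force
  moreover have "c * z powr (\<gamma> - 1) \<ge> (\<gamma>*\<eta> + 2*\<eta> powr \<beta>) * z powr (\<gamma> - 1)"
    using ec zg by (intro mult_right_mono) auto
  ultimately have "l > 0" unfolding l by (simp add: algebra_simps)
  then have "w t1 - w s > 0" using mv slt by simp
  then show False using w1 ws by simp
qed

theorem lemmaA12:
  fixes \<beta> :: real
  assumes "0 < \<beta>" and "\<beta> < 1"
  shows "\<exists>\<eta>1 :: real \<Rightarrow> real.
    (\<forall>c>0. \<eta>1 c > 0) \<and> strict_mono_on {0<..} \<eta>1 \<and>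
    (\<forall>(T::real) (c::real) (F::real \<Rightarrow> real) (u::real \<Rightarrow> real) (u'::real \<Rightarrow> real).
       T > 0 \<longrightarrow> c > 0 \<longrightarrow>
       continuous_on {0..T} F \<longrightarrow> (\<forall>t\<in>{0..T}. F t \<ge> 0) \<longrightarrow>
       (\<forall>t\<in>{0..T}. (u has_real_derivative u' t) (at t within {0..T})) \<longrightarrow>
       continuous_on {0..T} u' \<longrightarrow> (\<forall>t\<in>{0..T}. u t \<ge> 0) \<longrightarrow>
       (\<forall>t\<in>{0..T}. F t \<ge> c * t powr (\<beta> / (1 - \<beta>))) \<longrightarrow>
       (\<forall>t\<in>{0..T}. u' t \<ge> F t - 2 * (u t) powr \<beta>) \<longrightarrow>
       (\<forall>t\<in>{0..T}. u t \<ge> \<eta>1 c * t powr (1 / (1 - \<beta>))))"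
proof -
  define \<gamma> where "\<gamma> = 1/(1-\<beta>)"
  have gpos: "\<gamma> > 0" using assms by (simp add: \<gamma>_def)
  define \<eta> where "\<eta> c = min (c/(2*\<gamma>)) ((c/4) powr (1/\<beta>))" for c
  have pos: "\<forall>c>0. \<eta> c > 0" using gpos by (auto simp: \<eta>_def)
  have mono: "strict_mono_on {0<..} \<eta>"
  proof (rule strict_mono_onI)
    fix a b :: real assume ab: "a \<in> {0<..}" "b \<in> {0<..}" "a < b"
    have "a/(2*\<gamma>) < b/(2*\<gamma>)" using ab gpos by (simp add: divide_strict_right_mono)
    moreover have "(a/4) powr (1/\<beta>) < (b/4) powr (1/\<beta>)"
      using ab assms by (intro powr_less_mono2) auto
    ultimately show "\<eta> a < \<eta> b" unfolding \<eta>_def by linarith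
  qed
  have key: "\<gamma> * \<eta> c + 2 * \<eta> c powr \<beta> \<le> c" if c: "c > 0" for c
  proof -
    have "\<gamma> * \<eta> c \<le> \<gamma> * (c/(2*\<gamma>))" using gpos by (intro mult_left_mono) (auto simp: \<eta>_def)
    also have "\<dots> = c/2" using gpos by simp
    finally have 1: "\<gamma> * \<eta> c \<le> c/2" .
    have "\<eta> c powr \<beta> \<le> ((c/4) powr (1/\<beta>)) powr \<beta>"
      using pos c assms by (intro powr_mono2) (auto simp: \<eta>_def less_imp_le)
    also have "\<dots> = c/4" using c assms by (simp add: powr_powr)
    finally show ?thesis using 1 by linarith
  qed
  show ?thesis
    apply (rule exI[of _ \<eta>])
    apply (intro conjI pos mono allI impI ballI)
    subgoal for T c F u u' t
      using comparison[OF assms \<gamma>_def _ key, where c=c and u=u and T=T and u'=u' and F=F] pos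
      by (auto simp: \<gamma>_def)
    done
qed

end
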